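(* Let $P,Q\in\Gamma_n$ and $0<r\le R$ with $r\le p_i/q_i\le R$ for all $i$. Let $s,t\in\mathbb{R}$ with $0\le s\le4$ and $t\ge-1$. Then $$r^{t+1}\Big(\frac{r+1}{2}\Big)^{s-t-1}(sr+4-s)\,\Omega_t(P\|Q)\le\zeta_s(P\|Q)\le R^{t+1}\Big(\frac{R+1}{2}\Big)^{s-t-1}(sR+4-s)\,\Omega_t(P\|Q).$$
   Context: $\Gamma_n=\{P=(p_1,\dots,p_n): p_i>0,\ \sum_i p_i=1\}$, $n\ge2$. For $P,Q\in\Gamma_n$ and $s\in\mathbb{R}$: $\Omega_s(P\|Q)=[s(s-1)]^{-1}\big[\sum_i p_i\big(\frac{p_i+q_i}{2p_i}\big)^s-1\big]$ for $s\ne0,1$; $\Omega_0(P\|Q)=\sum_i p_i\ln\frac{2p_i}{p_i+q_i}$; $\Omega_1(P\|Q)=\sum_i\frac{p_i+q_i}{2}\ln\frac{p_i+q_i}{2p_i}$. $\zeta_s(P\|Q)=(s-1)^{-1}\sum_i(p_i-q_i)\big(\frac{p_i+q_i}{2q_i}\big)^{s-1}$ for $s\ne1$; $\zeta_1(P\|Q)=\sum_i(p_i-q_i)\ln\frac{p_i+q_i}{2q_i}$. *)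

theory Defs
  imports Complex_Main
begin

definition Gamma :: "nat \<Rightarrow> (nat \<Rightarrow> real) set" where
  "Gamma n = {p. (\<forall>i<n. p i > 0) \<and> (\<Sum>i<n. p i) = 1}"

definition Omega :: "nat \<Rightarrow> real \<Rightarrow> (nat \<Rightarrow> real) \<Rightarrow> (nat \<Rightarrow> real) \<Rightarrow> real" where
  "Omega n s p q =
    (if s = 0 then (\<Sum>i<n. p i * ln (2 * p i / (p i + q i)))
     else if s = 1 then (\<Sum>i<n. (p i + q i) / 2 * ln ((p i + q i) / (2 * p i)))
     else ((\<Sum>i<n. p i * ((p i + q i) / (2 * p i)) powr s) - 1) / (s * (s - 1)))"

definition zeta :: "nat \<Rightarrow> real \<Rightarrow> (nat \<Rightarrow> real) \<Rightarrow> (nat \<Rightarrow> real) \<Rightarrow> real" where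
  "zeta n s p q =
    (if s = 1 then (\<Sum>i<n. (p i - q i) * ln ((p i + q i) / (2 * q i)))
     else (\<Sum>i<n. (p i - q i) * ((p i + q i) / (2 * q i)) powr (s - 1)) / (s - 1))"

end

theory Submission
  imports Defs
begin


lemma tangent:
  fixes F F' F'' :: "real \<Rightarrow> real"
  assumes d1: "\<And>y. a \<le> y \<Longrightarrow> y \<le> b \<Longrightarrow> (F has_real_derivative F' y) (at y)"
    and d2: "\<And>y. a \<le> y \<Longrightarrow> y \<le> b \<Longrightarrow> (F' has_real_derivative F'' y) (at y)"
    and nn: "\<And>y. a \<le> y \<Longrightarrow> y \<le> b \<Longrightarrow> F'' y \<ge> 0"
    and c: "a \<le> c" "c \<le> b" and x: "a \<le> x" "x \<le> b"
  shows "F x - F c \<ge> F' c * (x - c)"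
proof (cases x c rule: linorder_cases)
  case less
  obtain z where z: "x < z" "z < c" "F c - F x = (c - x) * F' z"
    using MVT2[OF less, of F F'] d1 c x by force
  have "F' z \<le> F' c"
    by (rule DERIV_nonneg_imp_nondecreasing[of z c F']) (use z c x d2 nn in force)+
  then have "(c - x) * F' z \<le> (c - x) * F' c" using less by (intro mult_left_mono) auto
  then show ?thesis using z by (simp add: algebra_simps)
next
  case equal then show ?thesis by simp
next
  case greater
  obtain z where z: "c < z" "z < x" "F x - F c = (x - c) * F' z"
    using MVT2[OF greater, of F F'] d1 c x by force
  have "F' c \<le> F' z"
    by (rule DERIV_nonneg_imp_nondecreasing[of c z F']) (use z c x d2 nn in force)+
  then have "(x - c) * F' c \<le> (x - c) * F' z" using greater by (intro mult_left_mono) auto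
  then show ?thesis using z by (simp add: algebra_simps)
qed

lemma weighted_tangent:
  fixes F F' F'' :: "real \<Rightarrow> real" and q x :: "nat \<Rightarrow> real"
  assumes d1: "\<And>y. r \<le> y \<Longrightarrow> y \<le> R \<Longrightarrow> (F has_real_derivative F' y) (at y)"
    and d2: "\<And>y. r \<le> y \<Longrightarrow> y \<le> R \<Longrightarrow> (F' has_real_derivative F'' y) (at y)"
    and nn: "\<And>y. r \<le> y \<Longrightarrow> y \<le> R \<Longrightarrow> F'' y \<ge> 0"
    and F1: "F 1 = 0" and r1: "r \<le> 1" "1 \<le> R"
    and q: "\<And>i. i < n \<Longrightarrow> q i > 0" and sq: "(\<Sum>i<n. q i) = 1" and sqx: "(\<Sum>i<n. q i * x i) = 1"
    and xb: "\<And>i. i < n \<Longrightarrow> r \<le> x i \<and> x i \<le> R"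
  shows "(\<Sum>i<n. q i * F (x i)) \<ge> 0"
proof -
  have "q i * (F' 1 * (x i - 1)) \<le> q i * F (x i)" if "i < n" for i
  proof -
    have "F (x i) - F 1 \<ge> F' 1 * (x i - 1)"
      by (rule tangent[OF d1 d2 nn]) (use r1 xb[OF that] in auto)
    then show ?thesis using q[OF that] F1 by (intro mult_left_mono) auto
  qed
  then have "(\<Sum>i<n. q i * (F' 1 * (x i - 1))) \<le> (\<Sum>i<n. q i * F (x i))"
    by (intro sum_mono) auto
  moreover have "(\<Sum>i<n. q i * (F' 1 * (x i - 1))) = F' 1 * ((\<Sum>i<n. q i * x i) - (\<Sum>i<n. q i))"
    by (simp add: sum_distrib_left sum_subtractf algebra_simps)
  ultimately show ?thesis using sq sqx by simp
qed

lemma abstract_ineq: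
  fixes ph ph1 ph2 g g1 g2 rho :: "real \<Rightarrow> real" and q x :: "nat \<Rightarrow> real"
  assumes q: "\<And>i. i < n \<Longrightarrow> q i > 0" and sq: "(\<Sum>i<n. q i) = 1" and sqx: "(\<Sum>i<n. q i * x i) = 1"
    and xb: "\<And>i. i < n \<Longrightarrow> r \<le> x i \<and> x i \<le> R" and r: "0 < r" "r \<le> 1" "1 \<le> R"
    and p1: "\<And>y. y > 0 \<Longrightarrow> (ph has_real_derivative ph1 y) (at y)"
    and p2: "\<And>y. y > 0 \<Longrightarrow> (ph1 has_real_derivative ph2 y) (at y)"
    and g1: "\<And>y. y > 0 \<Longrightarrow> (g has_real_derivative g1 y) (at y)"
    and g2: "\<And>y. y > 0 \<Longrightarrow> (g1 has_real_derivative g2 y) (at y)"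
    and gr: "\<And>y. y > 0 \<Longrightarrow> g2 y = rho y * ph2 y"
    and pn: "\<And>y. y > 0 \<Longrightarrow> ph2 y \<ge> 0"
    and mono: "\<And>y. r \<le> y \<Longrightarrow> y \<le> R \<Longrightarrow> rho r \<le> rho y \<and> rho y \<le> rho R"
    and z: "ph 1 = 0" "g 1 = 0"
  shows "rho r * (\<Sum>i<n. q i * ph (x i)) \<le> (\<Sum>i<n. q i * g (x i))
       \<and> (\<Sum>i<n. q i * g (x i)) \<le> rho R * (\<Sum>i<n. q i * ph (x i))"
proof
  have "(\<Sum>i<n. q i * (g (x i) - rho r * ph (x i))) \<ge> 0"
  proof (rule weighted_tangent[where F = "\<lambda>y. g y - rho r * ph y" and F' = "\<lambda>y. g1 y - rho r * ph1 y" and F'' = "\<lambda>y. g2 y - rho r * ph2 y"])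
    fix y assume y: "r \<le> y" "y \<le> R"
    then have "y > 0" using r by simp
    show "((\<lambda>y. g y - rho r * ph y) has_real_derivative g1 y - rho r * ph1 y) (at y)"
      by (intro DERIV_diff DERIV_cmult g1 p1 \<open>y > 0\<close>)
    show "((\<lambda>y. g1 y - rho r * ph1 y) has_real_derivative g2 y - rho r * ph2 y) (at y)"
      by (intro DERIV_diff DERIV_cmult g2 p2 \<open>y > 0\<close>)
    show "g2 y - rho r * ph2 y \<ge> 0"
      using gr[OF \<open>y > 0\<close>] pn[OF \<open>y > 0\<close>] mono[OF y]
      by (simp add: algebra_simps mult_left_mono)
  qed (use z q sq sqx xb r in auto)
  then show "rho r * (\<Sum>i<n. q i * ph (x i)) \<le> (\<Sum>i<n. q i * g (x i))"
    by (simp add: algebra_simps sum_subtractf sum_distrib_left)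
next
  have "(\<Sum>i<n. q i * (rho R * ph (x i) - g (x i))) \<ge> 0"
  proof (rule weighted_tangent[where F = "\<lambda>y. rho R * ph y - g y" and F' = "\<lambda>y. rho R * ph1 y - g1 y" and F'' = "\<lambda>y. rho R * ph2 y - g2 y"])
    fix y assume y: "r \<le> y" "y \<le> R"
    then have "y > 0" using r by simp
    show "((\<lambda>y. rho R * ph y - g y) has_real_derivative rho R * ph1 y - g1 y) (at y)"
      by (intro DERIV_diff DERIV_cmult g1 p1 \<open>y > 0\<close>)
    show "((\<lambda>y. rho R * ph1 y - g1 y) has_real_derivative rho R * ph2 y - g2 y) (at y)"
      by (intro DERIV_diff DERIV_cmult g2 p2 \<open>y > 0\<close>)
    show "rho R * ph2 y - g2 y \<ge> 0"
      using gr[OF \<open>y > 0\<close>] pn[OF \<open>y > 0\<close>] mono[OF y]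
      by (simp add: algebra_simps mult_left_mono)
  qed (use z q sq sqx xb r in auto)
  then show "(\<Sum>i<n. q i * g (x i)) \<le> rho R * (\<Sum>i<n. q i * ph (x i))"
    by (simp add: algebra_simps sum_subtractf sum_distrib_left)
qed


lemma XP: "(x::real) > 0 \<Longrightarrow> ((\<lambda>x. x powr a) has_real_derivative a * x powr (a-1)) (at x)"
  by (rule has_real_derivative_powr)

lemma UP: "(x::real) > 0 \<Longrightarrow> ((\<lambda>x. ((x+1)/2) powr a) has_real_derivative a * ((x+1)/2) powr (a-1) / 2) (at x)"
proof -
  assume "x > 0"
  then have "(x+1)/2 > 0" by simp
  have d: "((\<lambda>x. (x+1)/2) has_real_derivative 1/2) (at x)" by (auto intro!: derivative_eq_intros)
  from DERIV_chain2[where f="\<lambda>z. z powr a" and g="\<lambda>x. (x+1)/2", OF has_real_derivative_powr[OF \<open>(x+1)/2 > 0\<close>] d]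
  show ?thesis by simp
qed

lemma px: fixes x a :: real assumes "x > 0" shows "x powr (a + 1) = x powr a * x" "x powr (a + 2) = x powr a * x^2"
  using assms by (simp_all add: powr_add)

lemma phi_d1:
  fixes t x :: real assumes x: "x > 0"
  shows "((\<lambda>x. (x powr (1-t) * ((x+1)/2) powr t - 1)/(t*(t-1))) has_real_derivative
     ((1-t) * x powr (-t) * ((x+1)/2) powr t + t/2 * x powr (1-t) * ((x+1)/2) powr (t-1))/(t*(t-1))) (at x)"
  by (rule DERIV_cong[OF DERIV_cdivide[OF DERIV_diff[OF DERIV_mult[OF XP[OF x] UP[OF x]] DERIV_const]]])
     (use x in auto)

lemma phi_d2:
  fixes t x :: real assumes x: "x > 0" and t: "t \<noteq> 0" "t \<noteq> 1"
  shows "((\<lambda>x. ((1-t) * x powr (-t) * ((x+1)/2) powr t + t/2 * x powr (1-t) * ((x+1)/2) powr (t-1))/(t*(t-1))) has_real_derivative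
     x powr (-t-1) * ((x+1)/2) powr (t-2) / 4) (at x)"
proof (rule DERIV_cong[OF DERIV_cdivide[OF DERIV_add[OF DERIV_mult[OF DERIV_cmult[OF XP[OF x]] UP[OF x]] DERIV_mult[OF DERIV_cmult[OF XP[OF x]] UP[OF x]]]]])
  have u: "(x+1)/2 > 0" using x by simp
  have e1: "x powr (-t) = x powr (-t-1) * x" "x powr (1-t) = x powr (-t-1) * x^2" "x powr (1-t-1) = x powr (-t-1) * x"
    using px[OF x, of "-t-1"] by simp_all
  have e2: "((x+1)/2) powr t = ((x+1)/2) powr (t-2) * ((x+1)/2)^2" "((x+1)/2) powr (t-1) = ((x+1)/2) powr (t-2) * ((x+1)/2)"
     "((x+1)/2) powr (t-1-1) = ((x+1)/2) powr (t-2)"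
    using px[OF u, of "t-2"] by simp_all
  show "((1 - t) * (- t * x powr (- t - 1)) * ((x + 1) / 2) powr t +
     t * ((x + 1) / 2) powr (t - 1) / 2 * ((1 - t) * x powr - t) +
     (t / 2 * ((1 - t) * x powr (1 - t - 1)) * ((x + 1) / 2) powr (t - 1) +
      (t - 1) * ((x + 1) / 2) powr (t - 1 - 1) / 2 * (t / 2 * x powr (1 - t)))) /
    (t * (t - 1)) =
    x powr (- t - 1) * ((x + 1) / 2) powr (t - 2) / 4"
    using t apply (simp only: e1 e2)
    apply (simp add: divide_simps)
    apply (simp add: algebra_simps power2_eq_square)
    done
qed
lemma LN: "(x::real) > 0 \<Longrightarrow> ((\<lambda>x. ln x) has_real_derivative inverse x) (at x)"
  by (rule DERIV_ln)
lemma LN1: "(x::real) > 0 \<Longrightarrow> ((\<lambda>x. ln (x+1)) has_real_derivative inverse (x+1)) (at x)"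
  by (auto intro!: derivative_eq_intros simp: inverse_eq_divide)
lemma INV1: "(x::real) > 0 \<Longrightarrow> ((\<lambda>x. inverse (x+1)) has_real_derivative - inverse ((x+1)^2)) (at x)"
  by (auto intro!: derivative_eq_intros simp: power2_eq_square field_simps)
lemma INV: "(x::real) > 0 \<Longrightarrow> ((\<lambda>x. inverse x) has_real_derivative - inverse (x^2)) (at x)"
  by (auto intro!: derivative_eq_intros simp: power2_eq_square field_simps)

lemma pm: fixes x :: real assumes "x > 0" shows "x powr (-1) = inverse x" "x powr (-2) = inverse (x^2)"
  using assms by (simp_all add: powr_minus powr_numeral)

lemma phi0_d1: assumes x: "(x::real) > 0"
  shows "((\<lambda>x. x * (ln x - ln (x+1) + ln 2)) has_real_derivative ln x - ln (x+1) + ln 2 + inverse (x+1)) (at x)"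
  by (rule DERIV_cong[OF DERIV_mult[OF DERIV_ident DERIV_add[OF DERIV_diff[OF LN[OF x] LN1[OF x]] DERIV_const]]])
     (use x in \<open>simp add: pm inverse_eq_divide\<close>; use x in \<open>simp add: divide_simps\<close>; simp add: algebra_simps power2_eq_square)

lemma phi0_d2: assumes x: "(x::real) > 0"
  shows "((\<lambda>x. ln x - ln (x+1) + ln 2 + inverse (x+1)) has_real_derivative x powr (-1) * ((x+1)/2) powr (-2) / 4) (at x)"
  by (rule DERIV_cong[OF DERIV_add[OF DERIV_add[OF DERIV_diff[OF LN[OF x] LN1[OF x]] DERIV_const] INV1[OF x]]])
     (use x in \<open>simp add: pm inverse_eq_divide\<close>; use x in \<open>simp add: divide_simps\<close>; simp add: algebra_simps power2_eq_square)

lemma phi1_d1: assumes x: "(x::real) > 0"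
  shows "((\<lambda>x. (x+1)/2 * (ln (x+1) - ln x - ln 2)) has_real_derivative (ln (x+1) - ln x - ln 2)/2 - inverse x / 2) (at x)"
  by (rule DERIV_cong[OF DERIV_mult[OF DERIV_cdivide[OF DERIV_add[OF DERIV_ident DERIV_const]] DERIV_diff[OF DERIV_diff[OF LN1[OF x] LN[OF x]] DERIV_const]]])
     (use x in \<open>simp add: pm inverse_eq_divide\<close>; use x in \<open>simp add: divide_simps\<close>; simp add: algebra_simps power2_eq_square)

lemma phi1_d2: assumes x: "(x::real) > 0"
  shows "((\<lambda>x. (ln (x+1) - ln x - ln 2)/2 - inverse x / 2) has_real_derivative x powr (-2) * ((x+1)/2) powr (-1) / 4) (at x)"
  by (rule DERIV_cong[OF DERIV_diff[OF DERIV_cdivide[OF DERIV_diff[OF DERIV_diff[OF LN1[OF x] LN[OF x]] DERIV_const]] DERIV_cdivide[OF INV[OF x]]]])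
     (use x in \<open>simp add: pm inverse_eq_divide\<close>; use x in \<open>simp add: divide_simps\<close>; simp add: algebra_simps power2_eq_square)

lemma g_d1: assumes x: "(x::real) > 0" and s: "s \<noteq> 1"
  shows "((\<lambda>x. (x-1) * ((x+1)/2) powr (s-1) / (s-1)) has_real_derivative ((x+1)/2) powr (s-1) / (s-1) + (x-1) * ((x+1)/2) powr (s-2) / 2) (at x)"
  by (rule DERIV_cong[OF DERIV_cdivide[OF DERIV_mult[OF DERIV_diff[OF DERIV_ident DERIV_const] UP[OF x]]]])
     (use x s in \<open>simp add: pm inverse_eq_divide\<close>; use x s in \<open>simp add: divide_simps\<close>; simp add: algebra_simps power2_eq_square)

lemma g_d2: assumes x: "(x::real) > 0" and s: "s \<noteq> 1"
  shows "((\<lambda>x. ((x+1)/2) powr (s-1) / (s-1) + (x-1) * ((x+1)/2) powr (s-2) / 2) has_real_derivative ((x+1)/2) powr (s-3) * (s*x+4-s) / 4) (at x)"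
proof (rule DERIV_cong[OF DERIV_add[OF DERIV_cdivide[OF UP[OF x]] DERIV_cdivide[OF DERIV_mult[OF DERIV_diff[OF DERIV_ident DERIV_const] UP[OF x]]]]])
  have u: "(x+1)/2 > 0" using x by simp
  have e2: "((x+1)/2) powr (s-1-1) = ((x+1)/2) powr (s-3) * ((x+1)/2)" "((x+1)/2) powr (s-1) = ((x+1)/2) powr (s-3) * ((x+1)/2)^2"
     "((x+1)/2) powr (s-2) = ((x+1)/2) powr (s-3) * ((x+1)/2)" "((x+1)/2) powr (s-2-1) = ((x+1)/2) powr (s-3)"
    using px[OF u, of "s-3"] by simp_all
  show "(s - 1) * ((x + 1) / 2) powr (s - 1 - 1) / 2 / (s - 1) +
    ((1 - 0) * ((x + 1) / 2) powr (s - 2) + (s - 2) * ((x + 1) / 2) powr (s - 2 - 1) / 2 * (x - 1)) / 2 =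
    ((x + 1) / 2) powr (s - 3) * (s * x + 4 - s) / 4"
    using s apply (simp only: e2)
    apply (simp add: divide_simps)
    apply (simp add: algebra_simps power2_eq_square)
    done
qed

lemma g1_d1: assumes x: "(x::real) > 0"
  shows "((\<lambda>x. (x-1) * (ln (x+1) - ln 2)) has_real_derivative ln (x+1) - ln 2 + 1 - 2 * inverse (x+1)) (at x)"
  by (rule DERIV_cong[OF DERIV_mult[OF DERIV_diff[OF DERIV_ident DERIV_const] DERIV_diff[OF LN1[OF x] DERIV_const]]])
     (use x in \<open>simp add: pm inverse_eq_divide\<close>; use x in \<open>simp add: divide_simps\<close>; simp add: algebra_simps power2_eq_square)

lemma g1_d2: assumes x: "(x::real) > 0"
  shows "((\<lambda>x. ln (x+1) - ln 2 + 1 - 2 * inverse (x+1)) has_real_derivative ((x+1)/2) powr (-2) * (x+3) / 4) (at x)"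
  by (rule DERIV_cong[OF DERIV_diff[OF DERIV_add[OF DERIV_diff[OF LN1[OF x] DERIV_const] DERIV_const] DERIV_cmult[OF INV1[OF x]]]])
     (use x in \<open>simp add: pm inverse_eq_divide\<close>; use x in \<open>simp add: divide_simps\<close>; simp add: algebra_simps power2_eq_square)



lemma rho_alt: fixes y :: real assumes y: "y > 0"
  shows "y powr (t+1) * ((y+1)/2) powr (s-t-1) = (2*y/(y+1)) powr (t+1) * ((y+1)/2) powr s"
proof -
  have u: "(y+1)/2 > 0" using y by simp
  have e: "2*y/(y+1) = y / ((y+1)/2)" by simp
  have "(2*y/(y+1)) powr (t+1) = y powr (t+1) / ((y+1)/2) powr (t+1)"
    unfolding e by (rule powr_divide)
  moreover have "((y+1)/2) powr (s-t-1) = ((y+1)/2) powr s / ((y+1)/2) powr (t+1)"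
    using powr_diff[of "(y+1)/2" s "t+1"] by (simp add: algebra_simps)
  ultimately show ?thesis by simp
qed

lemma rho_mono: fixes y z s t :: real assumes y: "y > 0" and yz: "y \<le> z" and s: "0 \<le> s" "s \<le> 4" and t: "t \<ge> -1"
  shows "y powr (t+1) * ((y+1)/2) powr (s-t-1) * (s*y+4-s) \<le> z powr (t+1) * ((z+1)/2) powr (s-t-1) * (s*z+4-s)"
proof -
  have z: "z > 0" using y yz by simp
  have a: "(2*y/(y+1)) powr (t+1) \<le> (2*z/(z+1)) powr (t+1)"
  proof (rule powr_mono2)
    show "2*y/(y+1) \<le> 2*z/(z+1)" using y z yz by (simp add: divide_simps algebra_simps)
  qed (use t y in auto)
  have b: "((y+1)/2) powr s \<le> ((z+1)/2) powr s"
    by (rule powr_mono2) (use s y yz in auto)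
  have c: "s*y+4-s \<le> s*z+4-s" using s yz by (simp add: mult_left_mono)
  have c0: "0 \<le> s*y+4-s"
  proof -
    have "s*y \<ge> 0" using s y by simp
    then show ?thesis using s by linarith
  qed
  have "(2*y/(y+1)) powr (t+1) * ((y+1)/2) powr s * (s*y+4-s) \<le> (2*z/(z+1)) powr (t+1) * ((z+1)/2) powr s * (s*z+4-s)"
    by (intro mult_mono a b c) (use c0 in auto)
  then show ?thesis using rho_alt[OF y, of t s] rho_alt[OF z, of t s] by simp
qed

lemma g2_rho: fixes y :: real assumes y: "y > 0"
  shows "((y+1)/2) powr (s-3) * (s*y+4-s) / 4 = (y powr (t+1) * ((y+1)/2) powr (s-t-1) * (s*y+4-s)) * (y powr (-t-1) * ((y+1)/2) powr (t-2) / 4)"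
proof -
  have u: "(y+1)/2 > 0" using y by simp
  have a: "y powr (t+1) * y powr (-t-1) = 1" using y by (simp add: powr_add[symmetric])
  have b: "((y+1)/2) powr (s-t-1) * ((y+1)/2) powr (t-2) = ((y+1)/2) powr (s-3)"
    using u by (simp add: powr_add[symmetric])
  have e: "\<And>A B C D K::real. (A*C*K)*(B*D/4) = (A*B)*(C*D)*K/4" by (simp add: field_simps)
  show ?thesis by (simp only: e a b mult_1_left)
qed

lemma term_gen: fixes p q t :: real assumes p: "p > 0" and q: "q > 0"
  shows "q * ((p/q) powr (1-t) * ((p/q+1)/2) powr t) = p * ((p+q)/(2*p)) powr t"
proof -
  let ?x = "p/q" and ?u = "(p/q+1)/2"
  have x: "?x > 0" using p q by simp
  then have u: "?u > 0" by simp
  have e: "(p+q)/(2*p) = ?u / ?x" using p q by (simp add: field_simps)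
  have "((p+q)/(2*p)) powr t = ?u powr t / ?x powr t" unfolding e by (rule powr_divide)
  moreover have "?x powr (1-t) = ?x / ?x powr t"
  proof -
    have "?x powr (1-t) = ?x powr 1 / ?x powr t" by (rule powr_diff)
    also have "?x powr 1 = ?x" using p q by simp
    finally show ?thesis .
  qed
  moreover have qx: "q * ?x = p" using q by simp
  moreover have "\<And>X U. q * (?x / X * U) = (q * ?x) * (U / X)" by (simp add: divide_inverse ac_simps)
  ultimately show ?thesis by simp
qed

lemma term0: fixes p q :: real assumes p: "p > 0" and q: "q > 0"
  shows "q * (p/q * (ln (p/q) - ln (p/q+1) + ln 2)) = p * ln (2 * p / (p + q))"
proof -
  have "p/q + 1 = (p+q)/q" using q by (simp add: field_simps)
  then have a: "ln (p/q+1) = ln (p+q) - ln q" using p q by (simp add: ln_div)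
  have b: "ln (p/q) = ln p - ln q" using p q by (simp add: ln_div)
  have c: "ln (2 * p / (p + q)) = ln 2 + ln p - ln (p+q)" using p q by (simp add: ln_div ln_mult)
  have "ln (p/q) - ln (p/q+1) + ln 2 = ln (2 * p / (p + q))" unfolding a b c by simp
  then show ?thesis using q by simp
qed

lemma term1: fixes p q :: real assumes p: "p > 0" and q: "q > 0"
  shows "q * ((p/q+1)/2 * (ln (p/q+1) - ln (p/q) - ln 2)) = (p + q) / 2 * ln ((p + q) / (2 * p))"
proof -
  have "p/q + 1 = (p+q)/q" using q by (simp add: field_simps)
  then have a: "ln (p/q+1) = ln (p+q) - ln q" using p q by (simp add: ln_div)
  have b: "ln (p/q) = ln p - ln q" using p q by (simp add: ln_div)
  have c: "ln ((p + q) / (2 * p)) = ln (p+q) - ln 2 - ln p" using p q by (simp add: ln_div ln_mult)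
  have d: "ln (p/q+1) - ln (p/q) - ln 2 = ln ((p + q) / (2 * p))" unfolding a b c by simp
  have e: "q * ((p/q+1)/2) = (p+q)/2" using q by (simp add: field_simps)
  show ?thesis unfolding d mult.assoc[symmetric] e ..
qed

lemma termg: fixes p q :: real assumes p: "p > 0" and q: "q > 0"
  shows "q * ((p/q-1) * ((p/q+1)/2) powr (s-1) / (s-1)) = (p - q) * ((p + q) / (2 * q)) powr (s - 1) / (s-1)"
proof -
  have e: "(p + q) / (2 * q) = (p/q+1)/2" using q by (simp add: field_simps)
  have m: "q * (p/q-1) = p - q" using q by (simp add: field_simps)
  show ?thesis unfolding e m[symmetric] by (simp only: mult.assoc times_divide_eq_right)
qed

lemma termg1: fixes p q :: real assumes p: "p > 0" and q: "q > 0"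
  shows "q * ((p/q-1) * (ln (p/q+1) - ln 2)) = (p - q) * ln ((p + q) / (2 * q))"
proof -
  have e: "(p + q) / (2 * q) = (p/q+1)/2" using q by (simp add: field_simps)
  have x: "p/q+1 > 0" using p q by (simp add: add_pos_pos)
  have l: "ln ((p/q+1)/2) = ln (p/q+1) - ln 2" using x by (simp add: ln_div)
  have m: "q * (p/q-1) = p - q" using q by (simp add: field_simps)
  show ?thesis unfolding e l mult.assoc[symmetric] m ..
qed

lemma phi_ex:
  fixes p q :: "nat \<Rightarrow> real" and t :: real
  assumes p: "\<And>i. i < n \<Longrightarrow> p i > 0" and q: "\<And>i. i < n \<Longrightarrow> q i > 0" and sq: "(\<Sum>i<n. q i) = 1"
  shows "\<exists>ph ph1. (\<forall>y>0. (ph has_real_derivative ph1 y) (at y))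
     \<and> (\<forall>y>0. (ph1 has_real_derivative (y powr (-t-1) * ((y+1)/2) powr (t-2) / 4)) (at y))
     \<and> ph 1 = 0 \<and> Omega n t p q = (\<Sum>i<n. q i * ph (p i / q i))"
proof (cases "t = 0")
  case True
  show ?thesis
  proof (intro exI conjI allI impI)
    show "((\<lambda>x. x * (ln x - ln (x+1) + ln 2)) has_real_derivative ln y - ln (y+1) + ln 2 + inverse (y+1)) (at y)"
      if "y > 0" for y using phi0_d1[OF that] .
    show "((\<lambda>x. ln x - ln (x+1) + ln 2 + inverse (x+1)) has_real_derivative (y powr (-t-1) * ((y+1)/2) powr (t-2) / 4)) (at y)"
      if "y > 0" for y using phi0_d2[OF that] True by simp
    show "(\<lambda>x. x * (ln x - ln (x+1) + ln 2)) 1 = 0" by simp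
    show "Omega n t p q = (\<Sum>i<n. q i * (\<lambda>x. x * (ln x - ln (x+1) + ln 2)) (p i / q i))"
    proof -
      have "Omega n t p q = (\<Sum>i<n. p i * ln (2 * p i / (p i + q i)))" unfolding Omega_def using True by simp
      also have "\<dots> = (\<Sum>i<n. q i * (\<lambda>x. x * (ln x - ln (x+1) + ln 2)) (p i / q i))"
      proof (rule sum.cong[OF refl])
        fix i assume "i \<in> {..<n}"
        then show "p i * ln (2 * p i / (p i + q i)) = q i * (\<lambda>x. x * (ln x - ln (x+1) + ln 2)) (p i / q i)"
          using term0[OF p[of i] q[of i]] by simp
      qed
      finally show ?thesis .
    qed
  qed
next
  case t0: False
  show ?thesis
  proof (cases "t = 1")
    case True
    show ?thesis
    proof (intro exI conjI allI impI)
      show "((\<lambda>x. (x+1)/2 * (ln (x+1) - ln x - ln 2)) has_real_derivative (ln (y+1) - ln y - ln 2)/2 - inverse y / 2) (at y)"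
        if "y > 0" for y using phi1_d1[OF that] .
      show "((\<lambda>x. (ln (x+1) - ln x - ln 2)/2 - inverse x / 2) has_real_derivative (y powr (-t-1) * ((y+1)/2) powr (t-2) / 4)) (at y)"
        if "y > 0" for y using phi1_d2[OF that] True by simp
      show "(\<lambda>x. (x+1)/2 * (ln (x+1) - ln x - ln 2)) 1 = 0" by simp
      show "Omega n t p q = (\<Sum>i<n. q i * (\<lambda>x. (x+1)/2 * (ln (x+1) - ln x - ln 2)) (p i / q i))"
      proof -
        have "Omega n t p q = (\<Sum>i<n. (p i + q i) / 2 * ln ((p i + q i) / (2 * p i)))" unfolding Omega_def using True by simp
        also have "\<dots> = (\<Sum>i<n. q i * (\<lambda>x. (x+1)/2 * (ln (x+1) - ln x - ln 2)) (p i / q i))"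
        proof (rule sum.cong[OF refl])
          fix i assume "i \<in> {..<n}"
          then show "(p i + q i) / 2 * ln ((p i + q i) / (2 * p i)) = q i * (\<lambda>x. (x+1)/2 * (ln (x+1) - ln x - ln 2)) (p i / q i)"
            using term1[OF p[of i] q[of i]] by simp
        qed
        finally show ?thesis .
      qed
    qed
  next
    case t1: False
    show ?thesis
    proof (intro exI conjI allI impI)
      show "((\<lambda>x. (x powr (1-t) * ((x+1)/2) powr t - 1)/(t*(t-1))) has_real_derivative
         ((1-t) * y powr (-t) * ((y+1)/2) powr t + t/2 * y powr (1-t) * ((y+1)/2) powr (t-1))/(t*(t-1))) (at y)"
        if "y > 0" for y using phi_d1[OF that] .
      show "((\<lambda>x. ((1-t) * x powr (-t) * ((x+1)/2) powr t + t/2 * x powr (1-t) * ((x+1)/2) powr (t-1))/(t*(t-1))) has_real_derivative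
         (y powr (-t-1) * ((y+1)/2) powr (t-2) / 4)) (at y)"
        if "y > 0" for y using phi_d2[OF that t0 t1] .
      show "(\<lambda>x. (x powr (1-t) * ((x+1)/2) powr t - 1)/(t*(t-1))) 1 = 0" by simp
      have "(\<Sum>i<n. q i * ((p i / q i) powr (1-t) * ((p i / q i+1)/2) powr t - 1)/(t*(t-1)))
          = (\<Sum>i<n. (p i * ((p i + q i)/(2 * p i)) powr t - q i)/(t*(t-1)))"
      proof (rule sum.cong[OF refl])
        fix i assume "i \<in> {..<n}"
        then have e: "q i * ((p i / q i) powr (1-t) * ((p i / q i+1)/2) powr t) = p i * ((p i + q i)/(2 * p i)) powr t"
          using term_gen[OF p[of i] q[of i]] by simp
        have "q i * ((p i / q i) powr (1-t) * ((p i / q i+1)/2) powr t - 1)/(t*(t-1))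
            = (q i * ((p i / q i) powr (1-t) * ((p i / q i+1)/2) powr t) - q i)/(t*(t-1))"
          by (simp only: right_diff_distrib mult_1_right times_divide_eq_right)
        then show "q i * ((p i / q i) powr (1-t) * ((p i / q i+1)/2) powr t - 1)/(t*(t-1))
          = (p i * ((p i + q i)/(2 * p i)) powr t - q i)/(t*(t-1))" by (simp only: e)
      qed
      also have "\<dots> = ((\<Sum>i<n. p i * ((p i + q i)/(2 * p i)) powr t) - 1)/(t*(t-1))"
        by (simp only: sum_divide_distrib[symmetric] sum_subtractf sq)
      finally show "Omega n t p q = (\<Sum>i<n. q i * (\<lambda>x. (x powr (1-t) * ((x+1)/2) powr t - 1)/(t*(t-1))) (p i / q i))"
        unfolding Omega_def using t0 t1 by (simp add: times_divide_eq_right)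
    qed
  qed
qed

lemma g_ex:
  fixes p q :: "nat \<Rightarrow> real" and s :: real
  assumes p: "\<And>i. i < n \<Longrightarrow> p i > 0" and q: "\<And>i. i < n \<Longrightarrow> q i > 0"
  shows "\<exists>g g1. (\<forall>y>0. (g has_real_derivative g1 y) (at y))
     \<and> (\<forall>y>0. (g1 has_real_derivative (((y+1)/2) powr (s-3) * (s*y+4-s) / 4)) (at y))
     \<and> g 1 = 0 \<and> zeta n s p q = (\<Sum>i<n. q i * g (p i / q i))"
proof (cases "s = 1")
  case True
  show ?thesis
  proof (intro exI conjI allI impI)
    show "((\<lambda>x. (x-1) * (ln (x+1) - ln 2)) has_real_derivative ln (y+1) - ln 2 + 1 - 2 * inverse (y+1)) (at y)"
      if "y > 0" for y using g1_d1[OF that] .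
    show "((\<lambda>x. ln (x+1) - ln 2 + 1 - 2 * inverse (x+1)) has_real_derivative (((y+1)/2) powr (s-3) * (s*y+4-s) / 4)) (at y)"
      if "y > 0" for y using g1_d2[OF that] True by (simp add: add.commute)
    show "(\<lambda>x. (x-1) * (ln (x+1) - ln 2)) 1 = 0" by simp
    show "zeta n s p q = (\<Sum>i<n. q i * (\<lambda>x. (x-1) * (ln (x+1) - ln 2)) (p i / q i))"
    proof -
      have "zeta n s p q = (\<Sum>i<n. (p i - q i) * ln ((p i + q i) / (2 * q i)))" unfolding zeta_def using True by simp
      also have "\<dots> = (\<Sum>i<n. q i * (\<lambda>x. (x-1) * (ln (x+1) - ln 2)) (p i / q i))"
      proof (rule sum.cong[OF refl])
        fix i assume "i \<in> {..<n}"
        then show "(p i - q i) * ln ((p i + q i) / (2 * q i)) = q i * (\<lambda>x. (x-1) * (ln (x+1) - ln 2)) (p i / q i)"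
          using termg1[OF p[of i] q[of i]] by simp
      qed
      finally show ?thesis .
    qed
  qed
next
  case False
  show ?thesis
  proof (intro exI conjI allI impI)
    show "((\<lambda>x. (x-1) * ((x+1)/2) powr (s-1) / (s-1)) has_real_derivative ((y+1)/2) powr (s-1) / (s-1) + (y-1) * ((y+1)/2) powr (s-2) / 2) (at y)"
      if "y > 0" for y using g_d1[OF that False] .
    show "((\<lambda>x. ((x+1)/2) powr (s-1) / (s-1) + (x-1) * ((x+1)/2) powr (s-2) / 2) has_real_derivative (((y+1)/2) powr (s-3) * (s*y+4-s) / 4)) (at y)"
      if "y > 0" for y using g_d2[OF that False] .
    show "(\<lambda>x. (x-1) * ((x+1)/2) powr (s-1) / (s-1)) 1 = 0" by simp
    show "zeta n s p q = (\<Sum>i<n. q i * (\<lambda>x. (x-1) * ((x+1)/2) powr (s-1) / (s-1)) (p i / q i))"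
    proof -
      have "zeta n s p q = (\<Sum>i<n. (p i - q i) * ((p i + q i) / (2 * q i)) powr (s - 1) / (s - 1))"
        unfolding zeta_def using False by (simp add: sum_divide_distrib)
      also have "\<dots> = (\<Sum>i<n. q i * (\<lambda>x. (x-1) * ((x+1)/2) powr (s-1) / (s-1)) (p i / q i))"
      proof (rule sum.cong[OF refl])
        fix i assume "i \<in> {..<n}"
        then show "(p i - q i) * ((p i + q i) / (2 * q i)) powr (s - 1) / (s - 1) = q i * (\<lambda>x. (x-1) * ((x+1)/2) powr (s-1) / (s-1)) (p i / q i)"
          by (subst termg[OF p[of i] q[of i], symmetric]) (use \<open>i \<in> {..<n}\<close> in simp_all)
      qed
      finally show ?thesis .
    qed
  qed
qed

theorem theorem4p1:
  fixes n :: nat and p q :: "nat \<Rightarrow> real" and r R s t :: real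
  assumes "n \<ge> 2"
    and "p \<in> Gamma n" and "q \<in> Gamma n"
    and "0 < r" and "r \<le> R"
    and "\<forall>i<n. r \<le> p i / q i \<and> p i / q i \<le> R"
    and "0 \<le> s" and "s \<le> 4" and "t \<ge> -1"
  shows "r powr (t + 1) * ((r + 1) / 2) powr (s - t - 1) * (s * r + 4 - s) * Omega n t p q
           \<le> zeta n s p q
       \<and> zeta n s p q
           \<le> R powr (t + 1) * ((R + 1) / 2) powr (s - t - 1) * (s * R + 4 - s) * Omega n t p q"
proof -
  have p: "\<And>i. i < n \<Longrightarrow> p i > 0" and sp: "(\<Sum>i<n. p i) = 1" using assms(2) by (auto simp: Gamma_def)
  have q: "\<And>i. i < n \<Longrightarrow> q i > 0" and sq: "(\<Sum>i<n. q i) = 1" using assms(3) by (auto simp: Gamma_def)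
  have xb: "\<And>i. i < n \<Longrightarrow> r \<le> p i / q i \<and> p i / q i \<le> R" using assms(6) by auto
  have sqx: "(\<Sum>i<n. q i * (p i / q i)) = 1"
    using sp by (simp add: q less_imp_neq[symmetric])
  have r1: "r \<le> 1"
  proof -
    have "(\<Sum>i<n. r * q i) \<le> (\<Sum>i<n. q i * (p i / q i))"
    proof (rule sum_mono)
      fix i assume "i \<in> {..<n}"
      then have i: "i < n" by simp
      show "r * q i \<le> q i * (p i / q i)"
        using mult_right_mono[OF conjunct1[OF xb[OF i]] less_imp_le[OF q[OF i]]] by (simp only: mult.commute)
    qed
    then show ?thesis using sq sqx by (simp add: sum_distrib_left[symmetric])
  qed
  have R1: "1 \<le> R"
  proof -
    have "(\<Sum>i<n. q i * (p i / q i)) \<le> (\<Sum>i<n. R * q i)"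
    proof (rule sum_mono)
      fix i assume "i \<in> {..<n}"
      then have i: "i < n" by simp
      show "q i * (p i / q i) \<le> R * q i"
        using mult_right_mono[OF conjunct2[OF xb[OF i]] less_imp_le[OF q[OF i]]] by (simp only: mult.commute)
    qed
    then show ?thesis using sq sqx by (simp add: sum_distrib_left[symmetric])
  qed
  obtain ph ph1 where ph: "\<forall>y>0. (ph has_real_derivative ph1 y) (at y)"
     "\<forall>y>0. (ph1 has_real_derivative (y powr (-t-1) * ((y+1)/2) powr (t-2) / 4)) (at y)"
     "ph 1 = 0" "Omega n t p q = (\<Sum>i<n. q i * ph (p i / q i))"
    using phi_ex[of n p q t, OF p q sq] by blast
  obtain g g1 where g: "\<forall>y>0. (g has_real_derivative g1 y) (at y)"
     "\<forall>y>0. (g1 has_real_derivative (((y+1)/2) powr (s-3) * (s*y+4-s) / 4)) (at y)"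
     "g 1 = 0" "zeta n s p q = (\<Sum>i<n. q i * g (p i / q i))"
    using g_ex[of n p q s, OF p q] by blast
  define rho where "rho = (\<lambda>y. y powr (t+1) * ((y+1)/2) powr (s-t-1) * (s*y+4-s))"
  have main: "rho r * (\<Sum>i<n. q i * ph (p i / q i)) \<le> (\<Sum>i<n. q i * g (p i / q i))
       \<and> (\<Sum>i<n. q i * g (p i / q i)) \<le> rho R * (\<Sum>i<n. q i * ph (p i / q i))"
  proof (rule abstract_ineq[where rho = rho and ?ph2.0 = "\<lambda>y. y powr (-t-1) * ((y+1)/2) powr (t-2) / 4"
        and ?g2.0 = "\<lambda>y. ((y+1)/2) powr (s-3) * (s*y+4-s) / 4"])
    show "\<And>y. r \<le> y \<Longrightarrow> y \<le> R \<Longrightarrow>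
      rho r \<le> rho y \<and>
      rho y \<le> rho R"
      unfolding rho_def using rho_mono assms(4,7,8,9) by auto
    show "\<And>y. 0 < y \<Longrightarrow> ((y+1)/2) powr (s-3) * (s*y+4-s) / 4 =
        rho y * (y powr (-t-1) * ((y+1)/2) powr (t-2) / 4)"
      unfolding rho_def using g2_rho by simp
    show "\<And>y. 0 < y \<Longrightarrow> 0 \<le> y powr (-t-1) * ((y+1)/2) powr (t-2) / 4" by simp
  qed (use q sq sqx xb assms(4) r1 R1 ph g in \<open>blast+\<close>)
  then show ?thesis using ph(4) g(4) unfolding rho_def by simp
qed

end
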